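(* Let $1\le p<\infty$, $N\ge2$, and let $T_i=T_{f_i,\omega^{(i)}}$ ($1\le i\le N$) be unilateral pseudo-shifts on $\ell^p(\mathbb{N})$. If $f_i=f_\ell$ for some $i\ne\ell$, then $T_1,\dots,T_N$ fail to satisfy the Disjoint Hypercyclicity Criterion. In particular, unilateral weighted backward shifts $T_1,\dots,T_N$ on $\ell^p(\mathbb{N})$ never satisfy the Disjoint Hypercyclicity Criterion.
   Context: $\{e_m\}$ is the canonical basis of $\ell^p(\mathbb{N})$ over $\mathbb{K}\in\{\mathbb{R},\mathbb{C}\}$. For a strictly increasing $f:\mathbb{N}\to\mathbb{N}$ with $f(1)>1$ and a bounded, nonzero sequence of scalars $\omega=(w_{f(m)})_{m}$, the pseudo-shift is $T_{f,\omega}(\sum_m\alpha_me_m)=\sum_mw_{f(m)}\alpha_{f(m)}e_m$. A unilateral weighted backward shift with bounded weight sequence $(w_m)$ is $Te_m=w_me_{m-1}$ for $m\ge2$, $Te_1=0$ (the pseudo-shift with $f(m)=m+1$). Operators $T_1,\dots,T_N$ on $X$ satisfy the Disjoint Hypercyclicity Criterion if there exist a strictly increasing sequence $(n_k)$, dense subsets $X_0,\dots,X_N$ of $X$ and maps $S_{j,k}:X_j\to X$ with: $T_i^{n_k}\to0$ pointwise on $X_0$; $S_{j,k}\to0$ pointwise on $X_j$; $T_i^{n_k}S_{j,k}-\delta_{i,j}\mathrm{Id}\to0$ pointwise on $X_j$, for all $1\le i,j\le N$. *)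

theory Defs
  imports "HOL-Analysis.Analysis"
begin

text \<open>Sequences are indexed by nat = {0,1,2,...}; paper index m corresponds to m-1 here.
The scalar field is any real_normed_field (i.e. the reals or the complex numbers).\<close>

definition lp :: "real \<Rightarrow> (nat \<Rightarrow> 'a::real_normed_field) set" where
  "lp p = {x. summable (\<lambda>n. norm (x n) powr p)}"

definition lpnorm :: "real \<Rightarrow> (nat \<Rightarrow> 'a::real_normed_field) \<Rightarrow> real" where
  "lpnorm p x = (\<Sum>n. norm (x n) powr p) powr (1 / p)"

definition lp_dense :: "real \<Rightarrow> (nat \<Rightarrow> 'a::real_normed_field) set \<Rightarrow> bool" where
  "lp_dense p D \<longleftrightarrow> D \<subseteq> lp p \<and>
     (\<forall>x\<in>lp p. \<forall>\<epsilon>>0. \<exists>y\<in>D. lpnorm p (\<lambda>n. x n - y n) < \<epsilon>)"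

text \<open>Pseudo-shift data (0-based): f strictly increasing with f 0 > 0 (paper: f(1) > 1),
weights bounded and nonzero; w m plays the role of the paper's w_{f(m)}.\<close>
definition pseudo_shift_data :: "(nat \<Rightarrow> nat) \<Rightarrow> (nat \<Rightarrow> 'a::real_normed_field) \<Rightarrow> bool" where
  "pseudo_shift_data f w \<longleftrightarrow> strict_mono f \<and> f 0 > 0 \<and> bounded (range w) \<and> (\<forall>m. w m \<noteq> 0)"

definition pseudo_shift :: "(nat \<Rightarrow> nat) \<Rightarrow> (nat \<Rightarrow> 'a::real_normed_field) \<Rightarrow> (nat \<Rightarrow> 'a) \<Rightarrow> (nat \<Rightarrow> 'a)" where
  "pseudo_shift f w x = (\<lambda>m. w m * x (f m))"

definition backward_shift :: "(nat \<Rightarrow> 'a::real_normed_field) \<Rightarrow> (nat \<Rightarrow> 'a) \<Rightarrow> (nat \<Rightarrow> 'a)" where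
  "backward_shift v x = (\<lambda>n. v n * x (Suc n))"

definition DHC :: "real \<Rightarrow> nat \<Rightarrow> (nat \<Rightarrow> (nat \<Rightarrow> 'a::real_normed_field) \<Rightarrow> (nat \<Rightarrow> 'a)) \<Rightarrow> bool" where
  "DHC p N T \<longleftrightarrow> (\<exists>(nk::nat \<Rightarrow> nat) (X::nat \<Rightarrow> (nat \<Rightarrow> 'a) set)
       (S::nat \<Rightarrow> nat \<Rightarrow> (nat \<Rightarrow> 'a) \<Rightarrow> (nat \<Rightarrow> 'a)).
     strict_mono nk \<and>
     (\<forall>j\<le>N. lp_dense p (X j)) \<and>
     (\<forall>j\<in>{1..N}. \<forall>k. \<forall>x\<in>X j. S j k x \<in> lp p) \<and>
     (\<forall>i\<in>{1..N}. \<forall>x\<in>X 0. (\<lambda>k. lpnorm p ((T i ^^ nk k) x)) \<longlonglongrightarrow> 0) \<and>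
     (\<forall>j\<in>{1..N}. \<forall>x\<in>X j. (\<lambda>k. lpnorm p (S j k x)) \<longlonglongrightarrow> 0) \<and>
     (\<forall>i\<in>{1..N}. \<forall>j\<in>{1..N}. \<forall>x\<in>X j.
        (\<lambda>k. lpnorm p (\<lambda>n. (T i ^^ nk k) (S j k x) n - (if i = j then x n else 0))) \<longlonglongrightarrow> 0))"

end

theory Submission
  imports Defs
begin

lemma lp_coord0:
  fixes z :: "nat \<Rightarrow> 'a::real_normed_field"
  assumes "z \<in> lp p" "p > 0"
  shows "norm (z 0) \<le> lpnorm p z"
proof -
  have s: "summable (\<lambda>n. norm (z n) powr p)" using assms(1) by (simp add: lp_def)
  have "sum (\<lambda>n. norm (z n) powr p) {0} \<le> (\<Sum>n. norm (z n) powr p)"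
    by (rule sum_le_suminf[OF s]) auto
  hence h: "norm (z 0) powr p \<le> (\<Sum>n. norm (z n) powr p)" by simp
  have "norm (z 0) = (norm (z 0) powr p) powr (1/p)"
    using assms(2) by (simp add: powr_powr)
  also have "\<dots> \<le> (\<Sum>n. norm (z n) powr p) powr (1/p)"
    by (rule powr_mono2) (use h assms(2) in auto)
  finally show ?thesis by (simp add: lpnorm_def)
qed

lemma lp_diff:
  fixes x y :: "nat \<Rightarrow> 'a::real_normed_field"
  assumes "x \<in> lp p" "y \<in> lp p" "p > 0"
  shows "(\<lambda>n. x n - y n) \<in> lp p"
proof -
  have sx: "summable (\<lambda>n. norm (x n) powr p)" and sy: "summable (\<lambda>n. norm (y n) powr p)"
    using assms by (auto simp: lp_def)
  have "summable (\<lambda>n. 2 powr p * (norm (x n) powr p + norm (y n) powr p))"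
    by (intro summable_mult summable_add sx sy)
  moreover have "norm (norm (x n - y n) powr p) \<le> 2 powr p * (norm (x n) powr p + norm (y n) powr p)" for n
  proof -
    have "norm (x n - y n) \<le> 2 * max (norm (x n)) (norm (y n))"
      using norm_triangle_ineq4[of "x n" "y n"] by linarith
    note le = this
    have "norm (x n - y n) powr p \<le> (2 * max (norm (x n)) (norm (y n))) powr p"
      by (rule powr_mono2[OF _ _ le]) (use assms(3) in auto)
    also have "\<dots> = 2 powr p * max (norm (x n)) (norm (y n)) powr p"
      by (simp add: powr_mult)
    also have "\<dots> \<le> 2 powr p * (norm (x n) powr p + norm (y n) powr p)"
      by (intro mult_left_mono) (auto simp: max_def)
    finally show ?thesis by simp
  qed
  ultimately have "summable (\<lambda>n. norm (x n - y n) powr p)"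
    by (rule summable_comparison_test')
  thus ?thesis unfolding lp_def by simp
qed

lemma lp_shift:
  fixes x :: "nat \<Rightarrow> 'a::real_normed_field"
  assumes "x \<in> lp p" "p > 0" "pseudo_shift_data f w"
  shows "pseudo_shift f w x \<in> lp p"
proof -
  have sx: "summable (\<lambda>n. norm (x n) powr p)" using assms by (auto simp: lp_def)
  have sm: "strict_mono f" and bd: "bounded (range w)" using assms(3) by (auto simp: pseudo_shift_data_def)
  obtain B where B: "\<And>m. norm (w m) \<le> B" using bd unfolding bounded_iff by blast
  have inj: "inj f" using sm by (rule strict_mono_imp_inj_on)
  have sf: "summable (\<lambda>m. norm (x (f m)) powr p)"
  proof (rule summableI_nonneg_bounded)
    fix n
    have "(\<Sum>i<n. norm (x (f i)) powr p) = sum (\<lambda>k. norm (x k) powr p) (f ` {..<n})"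
      using inj by (simp add: sum.reindex inj_on_def)
    also have "\<dots> \<le> (\<Sum>k. norm (x k) powr p)"
      by (rule sum_le_suminf[OF sx]) auto
    finally show "(\<Sum>i<n. norm (x (f i)) powr p) \<le> (\<Sum>k. norm (x k) powr p)" .
  qed auto
  have sB: "summable (\<lambda>m. B powr p * norm (x (f m)) powr p)" by (intro summable_mult sf)
  have bnd: "norm (norm (w m * x (f m)) powr p) \<le> B powr p * norm (x (f m)) powr p" for m
  proof -
    have "norm (w m * x (f m)) powr p = norm (w m) powr p * norm (x (f m)) powr p"
      by (simp add: norm_mult powr_mult)
    also have "\<dots> \<le> B powr p * norm (x (f m)) powr p"
      by (intro mult_right_mono powr_mono2) (use B assms(2) in auto)
    finally show ?thesis by simp
  qed
  have "summable (\<lambda>m. norm (w m * x (f m)) powr p)"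
    by (rule summable_comparison_test'[OF sB bnd])
  thus ?thesis unfolding lp_def pseudo_shift_def by simp
qed

lemma lp_shift_pow:
  fixes x :: "nat \<Rightarrow> 'a::real_normed_field"
  assumes "x \<in> lp p" "p > 0" "pseudo_shift_data f w"
  shows "(pseudo_shift f w ^^ n) x \<in> lp p"
  by (induction n) (use assms lp_shift in auto)

fun coef :: "(nat \<Rightarrow> nat) \<Rightarrow> (nat \<Rightarrow> 'a::real_normed_field) \<Rightarrow> nat \<Rightarrow> nat \<Rightarrow> 'a" where
  "coef f w 0 m = 1"
| "coef f w (Suc n) m = w m * coef f w n (f m)"

lemma shift_pow_formula:
  "(pseudo_shift f w ^^ n) y m = coef f w n m * y ((f ^^ n) m)"
proof (induction n arbitrary: m)
  case 0
  then show ?case by simp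
next
  case (Suc n)
  have "(pseudo_shift f w ^^ Suc n) y m = w m * (pseudo_shift f w ^^ n) y (f m)"
    by (simp only: funpow.simps comp_apply pseudo_shift_def)
  also have "\<dots> = w m * (coef f w n (f m) * y ((f ^^ n) (f m)))"
    by (simp only: Suc.IH)
  finally show ?case by (simp add: funpow_Suc_right del: funpow.simps)
qed

lemma coord_tendsto:
  fixes h :: "nat \<Rightarrow> nat \<Rightarrow> 'a::real_normed_field"
  assumes "(\<lambda>k. lpnorm p (h k)) \<longlonglongrightarrow> 0" "\<And>k. h k \<in> lp p" "p > 0"
  shows "(\<lambda>k. h k 0) \<longlonglongrightarrow> 0"
  by (rule Lim_null_comparison[OF _ assms(1)]) (use lp_coord0 assms in \<open>auto intro!: always_eventually\<close>)

lemma dense_nonzero: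
  fixes D :: "(nat \<Rightarrow> 'a::real_normed_field) set"
  assumes "lp_dense p D" "p > 0"
  obtains x where "x \<in> D" "x 0 \<noteq> 0"
proof -
  define e :: "nat \<Rightarrow> 'a" where "e = (\<lambda>n. if n = 0 then 1 else 0)"
  have "summable (\<lambda>n. norm (e n) powr p)"
    by (rule summable_finite[of "{0}"]) (auto simp: e_def)
  hence eL: "e \<in> lp p" unfolding lp_def by simp
  have D: "D \<subseteq> lp p" and app: "\<forall>x\<in>lp p. \<forall>\<epsilon>>0. \<exists>y\<in>D. lpnorm p (\<lambda>n. x n - y n) < \<epsilon>"
    using assms(1) unfolding lp_dense_def by auto
  have "\<exists>y\<in>D. lpnorm p (\<lambda>n. e n - y n) < 1" using app eL by simp
  then obtain y where y: "y \<in> D" "lpnorm p (\<lambda>n. e n - y n) < 1" by blast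
  have "y \<in> lp p" using y D by auto
  hence dL: "(\<lambda>n. e n - y n) \<in> lp p" using lp_diff eL assms(2) by blast
  have "norm (e 0 - y 0) \<le> lpnorm p (\<lambda>n. e n - y n)"
    using lp_coord0[OF dL assms(2)] by simp
  hence "norm (1 - y 0) < 1" using y(2) by (simp add: e_def)
  hence "y 0 \<noteq> 0" by auto
  thus ?thesis using y that by blast
qed

lemma no_dhc:
  fixes T :: "nat \<Rightarrow> (nat \<Rightarrow> 'a::real_normed_field) \<Rightarrow> (nat \<Rightarrow> 'a)"
  assumes p: "1 \<le> p" and i: "i \<in> {1..N}" and l: "l \<in> {1..N}" and il: "i \<noteq> l"
    and Ti: "T i = pseudo_shift g a" and Tl: "T l = pseudo_shift g b"
    and da: "pseudo_shift_data g a" and db: "pseudo_shift_data g b"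
  shows "\<not> DHC p N T"
proof
  assume "DHC p N T"
  then obtain nk X S where
    dense: "\<forall>j\<le>N. lp_dense p (X j)" and
    Slp: "\<forall>j\<in>{1..N}. \<forall>k. \<forall>x\<in>X j. S j k x \<in> lp p" and
    conv: "\<forall>i\<in>{1..N}. \<forall>j\<in>{1..N}. \<forall>x\<in>X j.
        (\<lambda>k. lpnorm p (\<lambda>n. (T i ^^ nk k) (S j k x) n - (if i = j then x n else 0))) \<longlonglongrightarrow> 0"
    unfolding DHC_def by blast
  have p0: "p > 0" using p by simp
  have Xlp: "X j \<subseteq> lp p" if "j \<le> N" for j using dense that by (auto simp: lp_dense_def)
  obtain x where x: "x \<in> X i" "x 0 \<noteq> 0" using dense_nonzero[of p "X i"] dense i p0 by auto
  obtain z where z: "z \<in> X l" "z 0 \<noteq> 0" using dense_nonzero[of p "X l"] dense l p0 by auto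
  have xlp: "x \<in> lp p" using Xlp i x by auto
  have zlp: "z \<in> lp p" using Xlp l z by auto
  define A where "A k = coef g a (nk k) 0" for k
  define B where "B k = coef g b (nk k) 0" for k
  define U where "U k = S i k x ((g ^^ nk k) 0)" for k
  define V where "V k = S l k z ((g ^^ nk k) 0)" for k
  have SxL: "S i k x \<in> lp p" for k using Slp i x by auto
  have SzL: "S l k z \<in> lp p" for k using Slp l z by auto
  have powa: "(T i ^^ n) y \<in> lp p" if "y \<in> lp p" for n y
    unfolding Ti by (rule lp_shift_pow[OF that p0 da])
  have powb: "(T l ^^ n) y \<in> lp p" if "y \<in> lp p" for n y
    unfolding Tl by (rule lp_shift_pow[OF that p0 db])
  have c1: "(\<lambda>k. (T i ^^ nk k) (S i k x) 0 - x 0) \<longlonglongrightarrow> 0"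
  proof (rule coord_tendsto[of p "\<lambda>k n. (T i ^^ nk k) (S i k x) n - x n", OF _ _ p0])
    have "(\<lambda>k. lpnorm p (\<lambda>n. (T i ^^ nk k) (S i k x) n - (if i = i then x n else 0))) \<longlonglongrightarrow> 0"
      using conv i l x by blast
    thus "(\<lambda>k. lpnorm p (\<lambda>n. (T i ^^ nk k) (S i k x) n - x n)) \<longlonglongrightarrow> 0" using il by simp
    show "\<And>k. (\<lambda>n. (T i ^^ nk k) (S i k x) n - x n) \<in> lp p" using lp_diff[OF powa[OF SxL] xlp p0] by simp
  qed
  have c2: "(\<lambda>k. (T l ^^ nk k) (S i k x) 0 - 0) \<longlonglongrightarrow> 0"
  proof (rule coord_tendsto[of p "\<lambda>k n. (T l ^^ nk k) (S i k x) n - 0", OF _ _ p0])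
    have "(\<lambda>k. lpnorm p (\<lambda>n. (T l ^^ nk k) (S i k x) n - (if l = i then x n else 0))) \<longlonglongrightarrow> 0"
      using conv i l x by blast
    thus "(\<lambda>k. lpnorm p (\<lambda>n. (T l ^^ nk k) (S i k x) n - 0)) \<longlonglongrightarrow> 0" using il by simp
    show "\<And>k. (\<lambda>n. (T l ^^ nk k) (S i k x) n - 0) \<in> lp p" using powb[OF SxL] by simp
  qed
  have c3: "(\<lambda>k. (T l ^^ nk k) (S l k z) 0 - z 0) \<longlonglongrightarrow> 0"
  proof (rule coord_tendsto[of p "\<lambda>k n. (T l ^^ nk k) (S l k z) n - z n", OF _ _ p0])
    have "(\<lambda>k. lpnorm p (\<lambda>n. (T l ^^ nk k) (S l k z) n - (if l = l then z n else 0))) \<longlonglongrightarrow> 0"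
      using conv i l z by blast
    thus "(\<lambda>k. lpnorm p (\<lambda>n. (T l ^^ nk k) (S l k z) n - z n)) \<longlonglongrightarrow> 0" using il by simp
    show "\<And>k. (\<lambda>n. (T l ^^ nk k) (S l k z) n - z n) \<in> lp p" using lp_diff[OF powb[OF SzL] zlp p0] by simp
  qed
  have c4: "(\<lambda>k. (T i ^^ nk k) (S l k z) 0 - 0) \<longlonglongrightarrow> 0"
  proof (rule coord_tendsto[of p "\<lambda>k n. (T i ^^ nk k) (S l k z) n - 0", OF _ _ p0])
    have "(\<lambda>k. lpnorm p (\<lambda>n. (T i ^^ nk k) (S l k z) n - (if i = l then z n else 0))) \<longlonglongrightarrow> 0"
      using conv i l z by blast
    thus "(\<lambda>k. lpnorm p (\<lambda>n. (T i ^^ nk k) (S l k z) n - 0)) \<longlonglongrightarrow> 0" using il by simp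
    show "\<And>k. (\<lambda>n. (T i ^^ nk k) (S l k z) n - 0) \<in> lp p" using powa[OF SzL] by simp
  qed
  have e1: "(\<lambda>k. A k * U k) \<longlonglongrightarrow> x 0"
    using c1 unfolding Ti A_def U_def shift_pow_formula by (simp add: LIM_zero_iff)
  have e2: "(\<lambda>k. B k * U k) \<longlonglongrightarrow> 0"
    using c2 unfolding Tl B_def U_def shift_pow_formula by simp
  have e3: "(\<lambda>k. B k * V k) \<longlonglongrightarrow> z 0"
    using c3 unfolding Tl B_def V_def shift_pow_formula by (simp add: LIM_zero_iff)
  have e4: "(\<lambda>k. A k * V k) \<longlonglongrightarrow> 0"
    using c4 unfolding Ti A_def V_def shift_pow_formula by simp
  have L1: "(\<lambda>k. (A k * U k) * (B k * V k)) \<longlonglongrightarrow> x 0 * z 0"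
    by (intro tendsto_mult e1 e3)
  have eq: "(\<lambda>k. (A k * U k) * (B k * V k)) = (\<lambda>k. (B k * U k) * (A k * V k))"
    by (simp add: algebra_simps)
  have "(\<lambda>k. (B k * U k) * (A k * V k)) \<longlonglongrightarrow> 0 * 0"
    by (intro tendsto_mult e2 e4)
  hence L2: "(\<lambda>k. (A k * U k) * (B k * V k)) \<longlonglongrightarrow> 0 * 0" by (simp only: eq)
  have "x 0 * z 0 = 0 * 0" by (rule LIMSEQ_unique[OF L1 L2])
  thus False using x z by simp
qed

theorem corollary2p9:
  fixes p :: real and N :: nat
    and f :: "nat \<Rightarrow> nat \<Rightarrow> nat" and w :: "nat \<Rightarrow> nat \<Rightarrow> 'a::real_normed_field"
  assumes "1 \<le> p" and "2 \<le> N"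
    and "\<forall>i\<in>{1..N}. pseudo_shift_data (f i) (w i)"
  shows "((\<exists>i\<in>{1..N}. \<exists>l\<in>{1..N}. i \<noteq> l \<and> f i = f l)
            \<longrightarrow> \<not> DHC p N (\<lambda>i. pseudo_shift (f i) (w i)))
    \<and> (\<forall>v :: nat \<Rightarrow> nat \<Rightarrow> 'a. (\<forall>i\<in>{1..N}. bounded (range (v i)) \<and> (\<forall>m. v i m \<noteq> 0))
            \<longrightarrow> \<not> DHC p N (\<lambda>i. backward_shift (v i)))"
proof (intro conjI impI allI)
  assume "\<exists>i\<in>{1..N}. \<exists>l\<in>{1..N}. i \<noteq> l \<and> f i = f l"
  then obtain i l where il: "i \<in> {1..N}" "l \<in> {1..N}" "i \<noteq> l" "f i = f l" by blast
  show "\<not> DHC p N (\<lambda>i. pseudo_shift (f i) (w i))"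
  proof (rule no_dhc[OF assms(1) il(1,2,3), where g="f i" and a="w i" and b="w l"])
    show "pseudo_shift_data (f i) (w i)" using il assms(3) by blast
    show "pseudo_shift_data (f i) (w l)" using assms(3) il(2) unfolding il(4) by blast
  qed (simp_all add: il)
next
  fix v :: "nat \<Rightarrow> nat \<Rightarrow> 'a"
  assume v: "\<forall>i\<in>{1..N}. bounded (range (v i)) \<and> (\<forall>m. v i m \<noteq> 0)"
  have bs: "backward_shift u = pseudo_shift Suc u" for u :: "nat \<Rightarrow> 'a"
    by (simp add: fun_eq_iff backward_shift_def pseudo_shift_def)
  have d: "pseudo_shift_data Suc (v j)" if "j \<in> {1..N}" for j
    using v that by (auto simp: pseudo_shift_data_def strict_mono_Suc_iff)
  show "\<not> DHC p N (\<lambda>i. backward_shift (v i))"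
  proof (rule no_dhc[OF assms(1), where i=1 and l=2 and g=Suc and a="v 1" and b="v 2"])
    show "pseudo_shift_data Suc (v 1)" "pseudo_shift_data Suc (v 2)" using d assms(2) by auto
  qed (use assms(2) bs in auto)
qed

end
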